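(* Let $(A, b, c)$ be a $k$-level LP instance. Let $p \le k-1$ and write $A_{pi} = \begin{pmatrix} A'_{pi} \\ A''_{pi}\end{pmatrix}$, $b_p = \begin{pmatrix} b'_p \\ b''_p\end{pmatrix}$ for each $i = 1,\ldots,k$, such that $A'_{pi} = 0$ for all $i = p+1,\ldots,k$. Define a $k$-level LP instance $(\hat{A}, \hat{b}, \hat{c})$ by $\hat{c} = c$, $\hat{A}_{li} = A_{li}$, $\hat{b}_l = b_l$ for all $l \ne p, p+1$ and all $i$, and $\hat{A}_{pi} = A''_{pi}$, $\hat{b}_p = b''_p$, $\hat{A}_{p+1\,i} = \begin{pmatrix} A'_{pi} \\ A_{p+1\,i}\end{pmatrix}$, $\hat{b}_{p+1} = \begin{pmatrix} b'_p \\ b_{p+1}\end{pmatrix}$ for $i = 1,\ldots,k$. Then the feasible set of the instance $(A,b,c)$ equals the feasible set of the instance $(\hat{A}, \hat{b}, \hat{c})$.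
   Context: A $k$-level LP instance $(A,b,c)$ has data $A_{li} \in \mathbb{Q}^{m_l \times n_i}$, $b_l \in \mathbb{Q}^{m_l}$, $c_{li} \in \mathbb{Q}^{n_i}$. Player $l$ chooses $x_l \in \mathbb{R}^{n_l}$ after players $1,\ldots,l-1$. The $l$-th player's problem, given $x_1,\ldots,x_{l-1}$, is $\inf_{x_l,\ldots,x_k}\{\sum_{i=l}^k c_{li}^\top x_i : \sum_{i=1}^k A_{li}x_i \ge b_l,\ (x_{l+1},\ldots,x_k) \in \mathcal{S}(\text{problem of player } l+1 \text{ given } x_1,\ldots,x_l)\}$, and the $k$-th player's problem is $\inf_{x_k}\{c_{kk}^\top x_k : \sum_{i=1}^k A_{ki}x_i \ge b_k\}$. The instance is identified with the first player's problem; its feasible set is the set of feasible $(x_1,\ldots,x_k)$ of the first player's problem. $\mathcal{S}(\cdot)$ denotes the optimal solution set (optimistic setting). *)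

theory Defs
  imports Main Complex_Main
begin

text \<open>Players are indexed 1..k.  Player i has n i variables
(indices j < n i), level l has m l constraints (rows r < m l).
Data: A l i r j (entry (r,j) of block A_{li}), b l r, c l i j, all rational.
A point (x_1,...,x_k) is encoded as x :: nat => nat => real, x i j = j-th component
of x_i, with all components outside the index ranges equal to 0.\<close>

type_synonym point = "nat \<Rightarrow> nat \<Rightarrow> real"

definition in_dom :: "nat \<Rightarrow> (nat \<Rightarrow> nat) \<Rightarrow> point \<Rightarrow> bool" where
  "in_dom k n x \<longleftrightarrow> (\<forall>i j. (i < 1 \<or> k < i \<or> n i \<le> j) \<longrightarrow> x i j = 0)"

definition cons_ok :: "nat \<Rightarrow> (nat \<Rightarrow> nat) \<Rightarrow> (nat \<Rightarrow> nat)
    \<Rightarrow> (nat \<Rightarrow> nat \<Rightarrow> nat \<Rightarrow> nat \<Rightarrow> rat) \<Rightarrow> (nat \<Rightarrow> nat \<Rightarrow> rat) \<Rightarrow> nat \<Rightarrow> point \<Rightarrow> bool" where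
  "cons_ok k n m A b l x \<longleftrightarrow>
     (\<forall>r < m l. real_of_rat (b l r) \<le> (\<Sum>i=1..k. \<Sum>j<n i. real_of_rat (A l i r j) * x i j))"

definition obj :: "nat \<Rightarrow> (nat \<Rightarrow> nat) \<Rightarrow> (nat \<Rightarrow> nat \<Rightarrow> nat \<Rightarrow> rat) \<Rightarrow> nat \<Rightarrow> point \<Rightarrow> real" where
  "obj k n c l x = (\<Sum>i=l..k. \<Sum>j<n i. real_of_rat (c l i j) * x i j)"

definition agree :: "nat \<Rightarrow> point \<Rightarrow> point \<Rightarrow> bool" where
  "agree l y x \<longleftrightarrow> (\<forall>i < l. \<forall>j. y i j = x i j)"

text \<open>lfeas ... d x: x is feasible for the problem of player l = k - d given x_1..x_{l-1}.
For d = 0 this is the k-th player's problem; for d > 0 the tail must be an optimal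
solution (optimistic setting) of the problem of player l+1 = k - d given x_1..x_l.\<close>
primrec lfeas :: "nat \<Rightarrow> (nat \<Rightarrow> nat) \<Rightarrow> (nat \<Rightarrow> nat)
    \<Rightarrow> (nat \<Rightarrow> nat \<Rightarrow> nat \<Rightarrow> nat \<Rightarrow> rat) \<Rightarrow> (nat \<Rightarrow> nat \<Rightarrow> rat) \<Rightarrow> (nat \<Rightarrow> nat \<Rightarrow> nat \<Rightarrow> rat)
    \<Rightarrow> nat \<Rightarrow> point \<Rightarrow> bool" where
  "lfeas k n m A b c 0 x \<longleftrightarrow> in_dom k n x \<and> cons_ok k n m A b k x"
| "lfeas k n m A b c (Suc d) x \<longleftrightarrow>
     in_dom k n x \<and> cons_ok k n m A b (k - Suc d) x \<and> lfeas k n m A b c d x \<and>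
     (\<forall>y. agree (k - d) y x \<and> lfeas k n m A b c d y \<longrightarrow> obj k n c (k - d) x \<le> obj k n c (k - d) y)"

definition feasible_set :: "nat \<Rightarrow> (nat \<Rightarrow> nat) \<Rightarrow> (nat \<Rightarrow> nat)
    \<Rightarrow> (nat \<Rightarrow> nat \<Rightarrow> nat \<Rightarrow> nat \<Rightarrow> rat) \<Rightarrow> (nat \<Rightarrow> nat \<Rightarrow> rat) \<Rightarrow> (nat \<Rightarrow> nat \<Rightarrow> nat \<Rightarrow> rat)
    \<Rightarrow> point set" where
  "feasible_set k n m A b c = {x. lfeas k n m A b c (k - 1) x}"

end

theory Submission
  imports Defs
begin

lemma split_range:
  fixes m' M :: nat
  assumes "m' \<le> M"
  shows "(\<forall>r<M. P r) \<longleftrightarrow> (\<forall>r<m'. P r) \<and> (\<forall>r<M - m'. P (r + m'))"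
proof safe
  fix r assume "\<forall>r<m'. P r" "\<forall>r<M - m'. P (r + m')" "r < M"
  then show "P r"
  proof (cases "r < m'")
    case False
    then have "r - m' < M - m'" "r - m' + m' = r" using \<open>r < M\<close> by arith+
    then show ?thesis using \<open>\<forall>r<M - m'. P (r + m')\<close> by metis
  qed (use \<open>\<forall>r<m'. P r\<close> in auto)
qed (use assms in auto)

lemma split_range2:
  "(\<forall>r<m' + (M::nat). (if r < m' then P r else Q (r - m'))) \<longleftrightarrow> (\<forall>r<m'. P r) \<and> (\<forall>r<M. Q r)"
proof safe
  fix r assume "\<forall>r<m' + M. (if r < m' then P r else Q (r - m'))" "r < M"
  moreover have "r + m' < m' + M" using \<open>r < M\<close> by simp
  ultimately have "if r + m' < m' then P (r + m') else Q (r + m' - m')" by blast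
  moreover have "\<not> r + m' < m'" "r + m' - m' = r" by arith+
  ultimately show "Q r" by simp
qed auto

theorem lemma3p3:
  fixes k p m' :: nat and n m mh :: "nat \<Rightarrow> nat"
    and A Ah :: "nat \<Rightarrow> nat \<Rightarrow> nat \<Rightarrow> nat \<Rightarrow> rat"
    and b bh :: "nat \<Rightarrow> nat \<Rightarrow> rat"
    and c :: "nat \<Rightarrow> nat \<Rightarrow> nat \<Rightarrow> rat"
  assumes hp: "1 \<le> p" "p \<le> k - 1"
    and hm': "m' \<le> m p"
    and hzero: "\<forall>i\<in>{p+1..k}. \<forall>r<m'. \<forall>j<n i. A p i r j = 0"
    and hmh: "mh p = m p - m'" "mh (p+1) = m' + m (p+1)"
      "\<forall>l. l \<noteq> p \<and> l \<noteq> p+1 \<longrightarrow> mh l = m l"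
    and hAh_other: "\<forall>l i r j. l \<noteq> p \<and> l \<noteq> p+1 \<longrightarrow> Ah l i r j = A l i r j"
    and hbh_other: "\<forall>l r. l \<noteq> p \<and> l \<noteq> p+1 \<longrightarrow> bh l r = b l r"
    and hAh_p: "\<forall>i r j. Ah p i r j = A p i (r + m') j"
    and hbh_p: "\<forall>r. bh p r = b p (r + m')"
    and hAh_p1: "\<forall>i r j. Ah (p+1) i r j = (if r < m' then A p i r j else A (p+1) i (r - m') j)"
    and hbh_p1: "\<forall>r. bh (p+1) r = (if r < m' then b p r else b (p+1) (r - m'))"
  shows "feasible_set k n m A b c = feasible_set k n mh Ah bh c"
proof -
  define S where "S l r x = (\<Sum>i=1..k. \<Sum>j<n i. real_of_rat (A l i r j) * x i j)" for l r x
  define C where "C x = (\<forall>r<m'. real_of_rat (b p r) \<le> S p r x)" for x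
  have Cagree: "C y = C x" if "agree (p+1) y x" for x y
  proof -
    have "S p r y = S p r x" if "r < m'" for r
      unfolding S_def
    proof (rule sum.cong[OF refl], rule sum.cong[OF refl])
      fix i j assume i: "i \<in> {1..k}" and j: "j \<in> {..<n i}"
      show "real_of_rat (A p i r j) * y i j = real_of_rat (A p i r j) * x i j"
      proof (cases "i \<le> p")
        case True then show ?thesis using \<open>agree (p+1) y x\<close> by (simp add: agree_def)
      next
        case False then show ?thesis using hzero i j \<open>r < m'\<close> by auto
      qed
    qed
    then show ?thesis unfolding C_def by auto
  qed
  have co_other: "cons_ok k n mh Ah bh l x = cons_ok k n m A b l x" if "l \<noteq> p" "l \<noteq> p+1" for l x
    using that hmh(3) hAh_other hbh_other unfolding cons_ok_def by simp
  have co_p: "cons_ok k n m A b p x \<longleftrightarrow> C x \<and> cons_ok k n mh Ah bh p x" for x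
    unfolding cons_ok_def C_def S_def hmh(1) using hAh_p hbh_p
    by (simp add: split_range[OF hm'])
  have co_p1: "cons_ok k n mh Ah bh (p+1) x \<longleftrightarrow> C x \<and> cons_ok k n m A b (p+1) x" for x
  proof -
    have "cons_ok k n mh Ah bh (p+1) x \<longleftrightarrow>
      (\<forall>r<m' + m (p+1). (if r < m' then real_of_rat (b p r) \<le> S p r x
          else real_of_rat (b (p+1) (r - m')) \<le> S (p+1) (r - m') x))"
      unfolding cons_ok_def hmh(2) S_def
    proof (intro all_cong imp_cong refl)
      fix r
      have a: "Ah (Suc p) i r j = (if r < m' then A p i r j else A (Suc p) i (r - m') j)" for i j
        using hAh_p1 by simp
      have bb: "bh (Suc p) r = (if r < m' then b p r else b (Suc p) (r - m'))"
        using hbh_p1 by simp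
      show "(real_of_rat (bh (p + 1) r) \<le> (\<Sum>i = 1..k. \<Sum>j<n i. real_of_rat (Ah (p + 1) i r j) * x i j)) =
        (if r < m' then real_of_rat (b p r) \<le> (\<Sum>i = 1..k. \<Sum>j<n i. real_of_rat (A p i r j) * x i j)
         else real_of_rat (b (p + 1) (r - m')) \<le> (\<Sum>i = 1..k. \<Sum>j<n i. real_of_rat (A (p + 1) i (r - m') j) * x i j))"
        by (cases "r < m'") (simp_all add: a bb)
    qed
    also have "\<dots> \<longleftrightarrow> C x \<and> cons_ok k n m A b (p+1) x"
      unfolding C_def cons_ok_def S_def by (rule split_range2)
    finally show ?thesis .
  qed
  have main: "d \<le> k - 1 \<Longrightarrow> \<forall>x. lfeas k n mh Ah bh c d x \<longleftrightarrow>
      (lfeas k n m A b c d x \<and> (k - d = p + 1 \<longrightarrow> C x))" for d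
  proof (induction d)
    case 0
    show ?case
    proof (cases "k = p + 1")
      case True then show ?thesis using co_p1 by auto
    next
      case False
      then have "k \<noteq> p" using hp by auto
      then show ?thesis using co_other False by auto
    qed
  next
    case (Suc d)
    then have IH: "\<forall>x. lfeas k n mh Ah bh c d x \<longleftrightarrow>
      (lfeas k n m A b c d x \<and> (k - d = p + 1 \<longrightarrow> C x))" by simp
    consider "k - Suc d = p + 1" | "k - Suc d = p" | "k - Suc d \<noteq> p" "k - Suc d \<noteq> p + 1" by blast
    then show ?case
    proof cases
      case 1
      then have "k - d \<noteq> p + 1" "k - d = Suc (p+1)" using Suc.prems by auto
      then show ?thesis using IH co_p1 1 by auto
    next
      case 2
      then have kd: "k - d = p + 1" using Suc.prems by auto
      show ?thesis
      proof (intro allI)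
        fix x
        show "lfeas k n mh Ah bh c (Suc d) x \<longleftrightarrow>
          (lfeas k n m A b c (Suc d) x \<and> (k - Suc d = p + 1 \<longrightarrow> C x))"
        proof
          assume h: "lfeas k n mh Ah bh c (Suc d) x"
          then have Cx: "C x" using IH kd by auto
          have opt: "\<forall>y. agree (k - d) y x \<and> lfeas k n m A b c d y \<longrightarrow>
              obj k n c (k - d) x \<le> obj k n c (k - d) y"
            using h IH Cagree Cx kd by auto
          show "lfeas k n m A b c (Suc d) x \<and> (k - Suc d = p + 1 \<longrightarrow> C x)"
            using h IH kd 2 co_p Cx opt by auto
        next
          assume h: "lfeas k n m A b c (Suc d) x \<and> (k - Suc d = p + 1 \<longrightarrow> C x)"
          then have Cx: "C x" using co_p 2 by auto
          have opt: "\<forall>y. agree (k - d) y x \<and> lfeas k n mh Ah bh c d y \<longrightarrow>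
              obj k n c (k - d) x \<le> obj k n c (k - d) y"
            using h IH by auto
          show "lfeas k n mh Ah bh c (Suc d) x"
            using h IH kd 2 co_p Cx opt by auto
        qed
      qed
    next
      case 3
      then have "k - d \<noteq> p + 1" using Suc.prems by auto
      then show ?thesis using IH co_other[OF 3] 3 by auto
    qed
  qed
  have "k - (k - 1) \<noteq> p + 1" using hp by auto
  then show ?thesis unfolding feasible_set_def using main[of "k - 1"] by auto
qed

end
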